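(* In the ARRU model described in the context: (a) $Y_n\to\infty$ almost surely; (b) $\min\{N_{1,n},N_{2,n}\}\to\infty$ almost surely.
   Context: ARRU model. Fix $0<a\le b<\infty$, a measurable space $S$, probability measures $\mu_1,\mu_2$ on $S$ and a measurable $u:S\to[a,b]$. On a probability space let $(\xi_{1,n})_{n\ge1}$ be i.i.d. with law $\mu_1$, $(\xi_{2,n})_{n\ge1}$ i.i.d. with law $\mu_2$, and $(U_n)_{n\ge1}$ i.i.d. uniform on $(0,1)$, the three sequences mutually independent. Put $D_{j,n}=u(\xi_{j,n})$ ($j=1,2$). Fix $y_{1,0},y_{2,0}>0$, and set $Y_{1,0}=y_{1,0}$, $Y_{2,0}=y_{2,0}$. Let $\mathcal F_0$ be trivial and $\mathcal F_n=\sigma\big(X_i,\ X_i\xi_{1,i}+(1-X_i)\xi_{2,i}:\ i\le n\big)$. Thresholds $\hat\rho_{1,n},\hat\rho_{2,n}$ ($n\ge0$) are $\mathcal F_n$-measurable random variables with values in $(0,1)$ and $\hat\rho_{1,n}\ge\hat\rho_{2,n}$ a.s. Recursively for $n\ge0$: $Y_n=Y_{1,n}+Y_{2,n}$, $Z_n=Y_{1,n}/Y_n$, $W_{1,n}=\mathbf 1\{Z_n\le\hat\rho_{1,n}\}$, $W_{2,n}=\mathbf 1\{Z_n\ge\hat\rho_{2,n}\}$, $X_{n+1}=\mathbf 1\{U_{n+1}<Z_n\}$, $Y_{1,n+1}=Y_{1,n}+X_{n+1}D_{1,n+1}W_{1,n}$, $Y_{2,n+1}=Y_{2,n}+(1-X_{n+1})D_{2,n+1}W_{2,n}$.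 Let $N_{1,n}=\sum_{i=1}^nX_i$ and $N_{2,n}=\sum_{i=1}^n(1-X_i)$. *)

theory Defs
  imports "HOL-Probability.Probability"
begin

text \<open>For a fixed outcome, the inputs are
  the initial compositions y10 y20, the sequences D1 n = D_{1,n}, D2 n = D_{2,n},
  the uniforms U n, and the thresholds r1 n, r2 n (all indexed as in the paper,
  D, U from n = 1 on, thresholds from n = 0 on).
  arru_Y returns the pair (Y_{1,n}, Y_{2,n}).\<close>

primrec arru_Y :: "real \<Rightarrow> real \<Rightarrow> (nat \<Rightarrow> real) \<Rightarrow> (nat \<Rightarrow> real) \<Rightarrow> (nat \<Rightarrow> real)
    \<Rightarrow> (nat \<Rightarrow> real) \<Rightarrow> (nat \<Rightarrow> real) \<Rightarrow> nat \<Rightarrow> real \<times> real" where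
  "arru_Y y10 y20 D1 D2 U r1 r2 0 = (y10, y20)"
| "arru_Y y10 y20 D1 D2 U r1 r2 (Suc n) =
     (let Y1 = fst (arru_Y y10 y20 D1 D2 U r1 r2 n);
          Y2 = snd (arru_Y y10 y20 D1 D2 U r1 r2 n);
          Z = Y1 / (Y1 + Y2);
          W1 = of_bool (Z \<le> r1 n);
          W2 = of_bool (Z \<ge> r2 n);
          X = of_bool (U (Suc n) < Z)
      in (Y1 + X * D1 (Suc n) * W1, Y2 + (1 - X) * D2 (Suc n) * W2))"

definition arru_Z :: "real \<Rightarrow> real \<Rightarrow> (nat \<Rightarrow> real) \<Rightarrow> (nat \<Rightarrow> real) \<Rightarrow> (nat \<Rightarrow> real)
    \<Rightarrow> (nat \<Rightarrow> real) \<Rightarrow> (nat \<Rightarrow> real) \<Rightarrow> nat \<Rightarrow> real" where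
  "arru_Z y10 y20 D1 D2 U r1 r2 n =
     fst (arru_Y y10 y20 D1 D2 U r1 r2 n) /
       (fst (arru_Y y10 y20 D1 D2 U r1 r2 n) + snd (arru_Y y10 y20 D1 D2 U r1 r2 n))"

text \<open>X_{n+1} = 1{U_{n+1} < Z_n} for n \<ge> 0 (as a boolean); X_0 is not part of the
  model and is set to False by convention (it is never used).\<close>
definition arru_X :: "real \<Rightarrow> real \<Rightarrow> (nat \<Rightarrow> real) \<Rightarrow> (nat \<Rightarrow> real) \<Rightarrow> (nat \<Rightarrow> real)
    \<Rightarrow> (nat \<Rightarrow> real) \<Rightarrow> (nat \<Rightarrow> real) \<Rightarrow> nat \<Rightarrow> bool" where
  "arru_X y10 y20 D1 D2 U r1 r2 n =
     (case n of 0 \<Rightarrow> False | Suc m \<Rightarrow> U (Suc m) < arru_Z y10 y20 D1 D2 U r1 r2 m)"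

datatype arru_idx = Xi1 nat | Xi2 nat | Unif nat

fun arru_idx_num :: "arru_idx \<Rightarrow> nat" where
  "arru_idx_num (Xi1 n) = n" | "arru_idx_num (Xi2 n) = n" | "arru_idx_num (Unif n) = n"

text \<open>Mutual independence of the family (xi_{1,n})_{n\<ge>1}, (xi_{2,n})_{n\<ge>1}, (U_n)_{n\<ge>1}
  (as the independence of the generated sigma-algebras, i.e. indep_vars unfolded).\<close>
definition arru_indep :: "'a measure \<Rightarrow> 's measure \<Rightarrow> (nat \<Rightarrow> 'a \<Rightarrow> 's) \<Rightarrow> (nat \<Rightarrow> 'a \<Rightarrow> 's)
    \<Rightarrow> (nat \<Rightarrow> 'a \<Rightarrow> real) \<Rightarrow> bool" where
  "arru_indep M S xi1 xi2 U =
     prob_space.indep_sets M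
       (\<lambda>i. case i of
              Xi1 n \<Rightarrow> {xi1 n -` A \<inter> space M | A. A \<in> sets S}
            | Xi2 n \<Rightarrow> {xi2 n -` A \<inter> space M | A. A \<in> sets S}
            | Unif n \<Rightarrow> {U n -` A \<inter> space M | A. A \<in> sets borel})
       {i. 1 \<le> arru_idx_num i}"

definition arru_filt :: "'a measure \<Rightarrow> 's measure \<Rightarrow> (nat \<Rightarrow> 'a \<Rightarrow> bool) \<Rightarrow> (nat \<Rightarrow> 'a \<Rightarrow> 's)
    \<Rightarrow> nat \<Rightarrow> 'a measure" where
  "arru_filt M S X Obs n =
     sigma (space M)
       (\<Union>i\<in>{1..n}. {X i -` A \<inter> space M | A. A \<in> sets (count_space (UNIV :: bool set))}
                   \<union> {Obs i -` A \<inter> space M | A. A \<in> sets S})"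

end

theory Submission
  imports Defs "HOL-Analysis.Harmonic_Numbers"
begin


lemma null_from_bound:
  fixes p :: "nat \<Rightarrow> real"
  assumes N: "N \<in> sets M" and le: "\<And>k. emeasure M N \<le> ennreal (p k)"
    and small: "\<And>e. 0 < e \<Longrightarrow> \<exists>k. p k < e"
  shows "N \<in> null_sets M"
proof -
  have "emeasure M N \<le> 0"
  proof (rule ennreal_le_epsilon)
    fix e :: real assume "0 < e"
    then obtain k where "p k < e" using small by blast
    then have "emeasure M N \<le> ennreal e" using le[of k]
      by (meson ennreal_leI less_imp_le order_trans)
    then show "emeasure M N \<le> 0 + ennreal e" by simp
  qed
  then show ?thesis using N by (simp add: null_sets_def)
qed

lemma harm_unbounded: "\<exists>k. K \<le> (harm k :: real)"
proof -
  define k where "k = nat \<lceil>exp K\<rceil>"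
  have "exp K \<le> real k + 1" unfolding k_def by linarith
  then have "K \<le> ln (real k + 1)"
    by (metis exp_gt_zero exp_le_cancel_iff exp_ln_iff less_le_trans)
  then show ?thesis using ln_le_harm[of k] by (intro exI[of _ k]) linarith
qed

lemma prod_small:
  fixes q :: "nat \<Rightarrow> real"
  assumes q0: "\<And>i. 0 \<le> q i" and q1: "\<And>i. q i \<le> 1"
    and div: "\<And>K. \<exists>k. K \<le> (\<Sum>i<k. q i)" and e: "0 < e"
  shows "\<exists>k. (\<Prod>i<k. 1 - q i) < e"
proof -
  obtain k where k: "1 - ln e \<le> (\<Sum>i<k. q i)" using div by blast
  have "(\<Prod>i<k. 1 - q i) \<le> (\<Prod>i<k. exp (- q i))"
  proof (rule prod_mono)
    fix i show "0 \<le> 1 - q i \<and> 1 - q i \<le> exp (- q i)"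
      using q1[of i] exp_ge_add_one_self[of "- q i"] by linarith
  qed
  also have "\<dots> = exp (- (\<Sum>i<k. q i))"
    using exp_sum[of "{..<k}" "\<lambda>i. - q i"] by (simp add: sum_negf)
  also have "\<dots> \<le> exp (ln e - 1)" using k by simp
  also have "\<dots> < e"
  proof -
    have "1 < exp (1::real)" by simp
    then show ?thesis using e by (simp add: exp_diff divide_less_eq)
  qed
  finally show ?thesis by blast
qed

lemma card_tendsto:
  assumes inf: "\<And>m. \<exists>i>m. P i"
  shows "filterlim (\<lambda>n. card {i\<in>{1..n}. P i}) at_top sequentially"
proof -
  have mono: "card {i\<in>{1..n}. P i} \<le> card {i\<in>{1..n'}. P i}" if "n \<le> n'" for n n'
    using that by (intro card_mono) auto
  have ex: "\<exists>N. K \<le> card {i\<in>{1..N}. P i}" for K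
  proof (induction K)
    case 0 then show ?case by simp
  next
    case (Suc K)
    then obtain N where N: "K \<le> card {i\<in>{1..N}. P i}" by blast
    obtain i where i: "i > N" "P i" using inf by blast
    have "insert i {j\<in>{1..N}. P j} \<subseteq> {j\<in>{1..i}. P j}" using i by auto
    then have "card (insert i {j\<in>{1..N}. P j}) \<le> card {j\<in>{1..i}. P j}" by (intro card_mono) auto
    moreover have "card (insert i {j\<in>{1..N}. P j}) = Suc (card {j\<in>{1..N}. P j})"
      using i by (intro card_insert_disjoint) auto
    ultimately show ?case using N by (intro exI[of _ i]) simp
  qed
  show ?thesis unfolding filterlim_at_top eventually_sequentially
  proof
    fix K
    obtain N where "K \<le> card {i\<in>{1..N}. P i}" using ex by blast
    then show "\<exists>N. \<forall>n\<ge>N. K \<le> card {i\<in>{1..n}. P i}" using mono le_trans by blast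
  qed
qed

lemma pred_all_less:
  fixes k :: nat
  assumes "\<And>i. i < k \<Longrightarrow> Measurable.pred N (P i)"
  shows "Measurable.pred N (\<lambda>x. \<forall>i<k. P i x)"
  using assms
proof (induction k)
  case 0 then show ?case by simp
next
  case (Suc k)
  have e: "(\<lambda>x. \<forall>i<Suc k. P i x) = (\<lambda>x. (\<forall>i<k. P i x) \<and> P k x)"
    by (auto simp: less_Suc_eq)
  have "Measurable.pred N (\<lambda>x. \<forall>i<k. P i x)" using Suc by simp
  moreover have "Measurable.pred N (P k)" using Suc by simp
  ultimately show ?case unfolding e by measurable
qed

lemma div_q:
  fixes y y0 b :: real and m :: nat
  assumes "0 < y" "0 < y0" "0 < b"
  shows "\<exists>k. K \<le> (\<Sum>i<k. y / (y0 + b * real (m + i)))"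
proof -
  define C where "C = y0 + b * m + b"
  have C: "0 < C" using assms unfolding C_def by (simp add: add_pos_nonneg)
  obtain k where k: "K * C / y \<le> harm k" using harm_unbounded by blast
  have "(\<Sum>i<k. (y / C) * inverse (real (Suc i))) \<le> (\<Sum>i<k. y / (y0 + b * real (m + i)))"
  proof (rule sum_mono)
    fix i assume "i \<in> {..<k}"
    have pos: "0 < y0 + b * real (m + i)" using assms by (simp add: add_pos_nonneg)
    have le: "y0 + b * real (m + i) \<le> C * real (Suc i)"
      unfolding C_def using assms by (simp add: algebra_simps)
    have "(y / C) * inverse (real (Suc i)) = y / (C * real (Suc i))" by (simp add: field_simps)
    also have "\<dots> \<le> y / (y0 + b * real (m + i))"
      by (rule divide_left_mono[OF le]) (use assms pos C in auto)
    finally show "(y / C) * inverse (real (Suc i)) \<le> y / (y0 + b * real (m + i))" .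
  qed
  also note calculation
  moreover have "(\<Sum>i<k. (y / C) * inverse (real (Suc i))) = (y / C) * harm k"
    by (simp add: harm_altdef sum_distrib_left)
  moreover have "K \<le> (y / C) * harm k" using k assms C by (simp add: field_simps)
  ultimately show ?thesis by (intro exI[of _ k]) linarith
qed

locale arru_loc =
  fixes M :: "'a measure" and S :: "'s measure"
    and u :: "'s \<Rightarrow> real" and a b y10 y20 :: real
    and xi1 xi2 :: "nat \<Rightarrow> 'a \<Rightarrow> 's" and U :: "nat \<Rightarrow> 'a \<Rightarrow> real"
    and rho1 rho2 :: "nat \<Rightarrow> 'a \<Rightarrow> real"
    and Yp :: "'a \<Rightarrow> nat \<Rightarrow> real \<times> real" and X :: "nat \<Rightarrow> 'a \<Rightarrow> bool"
    and Obs :: "nat \<Rightarrow> 'a \<Rightarrow> 's"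
  assumes Yp_def: "Yp = (\<lambda>\<omega>. arru_Y y10 y20 (\<lambda>n. u (xi1 n \<omega>)) (\<lambda>n. u (xi2 n \<omega>)) (\<lambda>n. U n \<omega>)
                     (\<lambda>n. rho1 n \<omega>) (\<lambda>n. rho2 n \<omega>))"
  and X_def: "X = (\<lambda>n \<omega>. arru_X y10 y20 (\<lambda>n. u (xi1 n \<omega>)) (\<lambda>n. u (xi2 n \<omega>)) (\<lambda>n. U n \<omega>)
                     (\<lambda>n. rho1 n \<omega>) (\<lambda>n. rho2 n \<omega>) n)"
  and Obs_def: "Obs = (\<lambda>n \<omega>. if X n \<omega> then xi1 n \<omega> else xi2 n \<omega>)"
  and M: "prob_space M"
    and ab: "0 < a" "a \<le> b"
    and u_meas: "u \<in> borel_measurable S"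
    and u_range: "\<And>s. s \<in> space S \<Longrightarrow> a \<le> u s \<and> u s \<le> b"
    and xi1_meas: "\<And>n. 1 \<le> n \<Longrightarrow> xi1 n \<in> measurable M S"
    and xi2_meas: "\<And>n. 1 \<le> n \<Longrightarrow> xi2 n \<in> measurable M S"
    and U_meas: "\<And>n. 1 \<le> n \<Longrightarrow> U n \<in> borel_measurable M"
    and U_distr: "\<And>n. 1 \<le> n \<Longrightarrow> distr M lborel (U n) = uniform_measure lborel {0<..<1}"
    and indep: "arru_indep M S xi1 xi2 U"
    and y0: "0 < y10" "0 < y20"
    and rho_meas: "\<And>n. rho1 n \<in> borel_measurable (arru_filt M S X Obs n)"
                  "\<And>n. rho2 n \<in> borel_measurable (arru_filt M S X Obs n)"
    and rho_range: "\<And>n \<omega>. \<omega> \<in> space M \<Longrightarrow> 0 < rho1 n \<omega> \<and> rho1 n \<omega> < 1"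
                   "\<And>n \<omega>. \<omega> \<in> space M \<Longrightarrow> 0 < rho2 n \<omega> \<and> rho2 n \<omega> < 1"
    and rho_order: "\<And>n. AE \<omega> in M. rho2 n \<omega> \<le> rho1 n \<omega>"
begin

sublocale prob_space M by (rule M)

definition "Y1 n \<omega> = fst (Yp \<omega> n)"
definition "Y2 n \<omega> = snd (Yp \<omega> n)"
definition "Z n \<omega> = Y1 n \<omega> / (Y1 n \<omega> + Y2 n \<omega>)"
abbreviation "F n \<equiv> arru_filt M S X Obs n"

lemma X_Suc: "X (Suc n) \<omega> = (U (Suc n) \<omega> < Z n \<omega>)"
  unfolding Z_def Y1_def Y2_def by (simp add: X_def arru_X_def arru_Z_def Yp_def)

lemma X_0: "\<not> X 0 \<omega>"
  by (simp add: X_def arru_X_def)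

lemma Y1_0: "Y1 0 \<omega> = y10" and Y2_0: "Y2 0 \<omega> = y20"
  unfolding Y1_def Y2_def by (simp_all add: Yp_def)

lemma Y1_Suc: "Y1 (Suc n) \<omega> = Y1 n \<omega> + (if X (Suc n) \<omega> \<and> Z n \<omega> \<le> rho1 n \<omega> then u (Obs (Suc n) \<omega>) else 0)"
  unfolding X_Suc Obs_def unfolding Z_def Y1_def Y2_def by (simp add: Yp_def Let_def)

lemma Y2_Suc: "Y2 (Suc n) \<omega> = Y2 n \<omega> + (if \<not> X (Suc n) \<omega> \<and> rho2 n \<omega> \<le> Z n \<omega> then u (Obs (Suc n) \<omega>) else 0)"
  unfolding X_Suc Obs_def unfolding Z_def Y1_def Y2_def by (simp add: Yp_def Let_def)

lemma Obs_space: "\<omega> \<in> space M \<Longrightarrow> Obs (Suc n) \<omega> \<in> space S"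
  unfolding Obs_def using xi1_meas[of "Suc n"] xi2_meas[of "Suc n"]
  by (auto dest: measurable_space)

lemma u_Obs: "\<omega> \<in> space M \<Longrightarrow> a \<le> u (Obs (Suc n) \<omega>) \<and> u (Obs (Suc n) \<omega>) \<le> b"
  using u_range Obs_space by blast

lemma Y_bounds:
  assumes "\<omega> \<in> space M"
  shows "y10 \<le> Y1 n \<omega> \<and> y20 \<le> Y2 n \<omega> \<and> Y1 n \<omega> + Y2 n \<omega> \<le> y10 + y20 + b * n"
proof (induction n)
  case 0 then show ?case by (simp add: Y1_0 Y2_0)
next
  case (Suc n)
  have "a \<le> u (Obs (Suc n) \<omega>)" "u (Obs (Suc n) \<omega>) \<le> b" using u_Obs[OF assms] by auto
  moreover have "\<not> (X (Suc n) \<omega> \<and> \<not> X (Suc n) \<omega>)" by simp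
  ultimately show ?case using Suc ab unfolding Y1_Suc Y2_Suc
    by (auto simp: algebra_simps split: if_splits)
qed

lemma Y1_mono_step: "\<omega> \<in> space M \<Longrightarrow> Y1 n \<omega> \<le> Y1 (Suc n) \<omega>"
  using u_Obs[of \<omega> n] ab unfolding Y1_Suc by auto

lemma Y2_mono_step: "\<omega> \<in> space M \<Longrightarrow> Y2 n \<omega> \<le> Y2 (Suc n) \<omega>"
  using u_Obs[of \<omega> n] ab unfolding Y2_Suc by auto

lemma Z_bounds: "\<omega> \<in> space M \<Longrightarrow> 0 < Z n \<omega> \<and> Z n \<omega> < 1"
  using Y_bounds[of \<omega> n] y0 unfolding Z_def by (auto simp: field_simps)

lemma F_gens_Pow:
  "(\<Union>i\<in>{1..n}. {X i -` A \<inter> space M | A. A \<in> sets (count_space (UNIV :: bool set))}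
                   \<union> {Obs i -` A \<inter> space M | A. A \<in> sets S}) \<subseteq> Pow (space M)"
  by auto

lemma space_F[simp]: "space (F n) = space M"
  unfolding arru_filt_def by (simp add: space_measure_of_conv)

lemma sets_F: "sets (F n) = sigma_sets (space M)
       (\<Union>i\<in>{1..n}. {X i -` A \<inter> space M | A. A \<in> sets (count_space (UNIV :: bool set))}
                   \<union> {Obs i -` A \<inter> space M | A. A \<in> sets S})"
  unfolding arru_filt_def by (rule sets_measure_of[OF F_gens_Pow])

lemma sets_F_mono: "m \<le> n \<Longrightarrow> sets (F m) \<subseteq> sets (F n)"
  unfolding sets_F by (intro sigma_sets_subseteq UN_mono) auto

definition "E i = (case i of Xi1 n \<Rightarrow> {xi1 n -` A \<inter> space M | A. A \<in> sets S}
            | Xi2 n \<Rightarrow> {xi2 n -` A \<inter> space M | A. A \<in> sets S}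
            | Unif n \<Rightarrow> {U n -` A \<inter> space M | A. A \<in> sets borel})"

definition "Ilow n = {i. 1 \<le> arru_idx_num i \<and> arru_idx_num i \<le> n}"
definition "Lg n = (\<Union>i\<in>Ilow n. E i)"
definition "Lm n = sigma (space M) (Lg n)"

lemma Lg_Pow: "Lg n \<subseteq> Pow (space M)"
  unfolding Lg_def E_def by (auto split: arru_idx.splits)

lemma space_Lm[simp]: "space (Lm n) = space M"
  unfolding Lm_def using Lg_Pow by (simp add: space_measure_of_conv)

lemma sets_Lm: "sets (Lm n) = sigma_sets (space M) (Lg n)"
  unfolding Lm_def by (rule sets_measure_of[OF Lg_Pow])

lemma Lg_M: "Lg n \<subseteq> sets M"
proof
  fix A assume "A \<in> Lg n"
  then obtain i where i: "i \<in> Ilow n" "A \<in> E i" unfolding Lg_def by auto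
  show "A \<in> sets M"
  proof (cases i)
    case (Xi1 k)
    with i obtain B where "A = xi1 k -` B \<inter> space M" "B \<in> sets S" "1 \<le> k"
      by (auto simp: E_def Ilow_def)
    then show ?thesis using xi1_meas[of k] by (simp add: measurable_sets)
  next
    case (Xi2 k)
    with i obtain B where "A = xi2 k -` B \<inter> space M" "B \<in> sets S" "1 \<le> k"
      by (auto simp: E_def Ilow_def)
    then show ?thesis using xi2_meas[of k] by (simp add: measurable_sets)
  next
    case (Unif k)
    with i obtain B where "A = U k -` B \<inter> space M" "B \<in> sets borel" "1 \<le> k"
      by (auto simp: E_def Ilow_def)
    then show ?thesis using U_meas[of k] by (simp add: measurable_sets)
  qed
qed

lemma sets_Lm_M: "sets (Lm n) \<subseteq> sets M"
  unfolding sets_Lm using Lg_M by (intro sets.sigma_sets_subset) auto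

lemma sets_Lm_mono: "m \<le> n \<Longrightarrow> sets (Lm m) \<subseteq> sets (Lm n)"
  unfolding sets_Lm Lg_def Ilow_def by (intro sigma_sets_subseteq UN_mono) auto

lemma in_Lm: "A \<in> E i \<Longrightarrow> i \<in> Ilow n \<Longrightarrow> A \<in> sets (Lm n)"
  unfolding sets_Lm Lg_def by (intro sigma_sets.Basic) auto

lemma U_Lm: "U (Suc n) \<in> borel_measurable (Lm (Suc n))"
proof (rule measurableI)
  fix A :: "real set" assume "A \<in> sets borel"
  then show "U (Suc n) -` A \<inter> space (Lm (Suc n)) \<in> sets (Lm (Suc n))"
    by (intro in_Lm[of _ "Unif (Suc n)"]) (auto simp: E_def Ilow_def)
qed auto

lemma xi1_Lm: "xi1 (Suc n) \<in> measurable (Lm (Suc n)) S"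
proof (rule measurableI)
  fix A assume "A \<in> sets S"
  then show "xi1 (Suc n) -` A \<inter> space (Lm (Suc n)) \<in> sets (Lm (Suc n))"
    by (intro in_Lm[of _ "Xi1 (Suc n)"]) (auto simp: E_def Ilow_def)
qed (use xi1_meas[of "Suc n"] in \<open>auto dest: measurable_space\<close>)

lemma xi2_Lm: "xi2 (Suc n) \<in> measurable (Lm (Suc n)) S"
proof (rule measurableI)
  fix A assume "A \<in> sets S"
  then show "xi2 (Suc n) -` A \<inter> space (Lm (Suc n)) \<in> sets (Lm (Suc n))"
    by (intro in_Lm[of _ "Xi2 (Suc n)"]) (auto simp: E_def Ilow_def)
qed (use xi2_meas[of "Suc n"] in \<open>auto dest: measurable_space\<close>)

lemma subalg_F: "m \<le> n \<Longrightarrow> subalgebra (F n) (F m)"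
  unfolding subalgebra_def using sets_F_mono by auto

lemma X_meas: "X (Suc n) \<in> measurable (F (Suc n)) (count_space UNIV)"
proof (rule measurableI)
  fix A :: "bool set"
  show "X (Suc n) -` A \<inter> space (F (Suc n)) \<in> sets (F (Suc n))"
    unfolding sets_F space_F by (intro sigma_sets.Basic UN_I[of "Suc n"] UnI1) auto
qed auto

lemma Obs_meas: "Obs (Suc n) \<in> measurable (F (Suc n)) S"
proof (rule measurableI)
  fix A assume "A \<in> sets S"
  then show "Obs (Suc n) -` A \<inter> space (F (Suc n)) \<in> sets (F (Suc n))"
    unfolding sets_F space_F by (intro sigma_sets.Basic UN_I[of "Suc n"] UnI2) auto
qed (auto simp: Obs_space)

lemma YZ_meas: "Y1 n \<in> borel_measurable (F n) \<and> Y2 n \<in> borel_measurable (F n) \<and> Z n \<in> borel_measurable (F n)"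
proof (induction n)
  case 0 then show ?case by (simp add: Y1_0 Y2_0 Z_def)
next
  case (Suc n)
  have sub: "subalgebra (F (Suc n)) (F n)" by (rule subalg_F) simp
  have Y1: "Y1 n \<in> borel_measurable (F (Suc n))" "Y2 n \<in> borel_measurable (F (Suc n))"
     "Z n \<in> borel_measurable (F (Suc n))"
    "rho1 n \<in> borel_measurable (F (Suc n))" "rho2 n \<in> borel_measurable (F (Suc n))"
    using Suc measurable_from_subalg[OF sub] rho_meas by blast+
  have X: "Measurable.pred (F (Suc n)) (X (Suc n))" using X_meas .
  have O: "(\<lambda>\<omega>. u (Obs (Suc n) \<omega>)) \<in> borel_measurable (F (Suc n))"
    using Obs_meas u_meas by measurable
  have A: "Y1 (Suc n) \<in> borel_measurable (F (Suc n))" unfolding Y1_Suc[abs_def]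
    using Y1 X O by measurable
  have B: "Y2 (Suc n) \<in> borel_measurable (F (Suc n))" unfolding Y2_Suc[abs_def]
    using Y1 X O by measurable
  have C: "Z (Suc n) \<in> borel_measurable (F (Suc n))" unfolding Z_def[abs_def] using A B by measurable
  show ?case using A B C by blast
qed

lemma sets_F_Lm: "sets (F n) \<subseteq> sets (Lm n)"
proof (induction n)
  case 0 then show ?case unfolding sets_F sets_Lm by (intro sigma_sets_subseteq) auto
next
  case (Suc n)
  have sub: "subalgebra (Lm (Suc n)) (F n)"
    using Suc sets_Lm_mono[of n "Suc n"] unfolding subalgebra_def by auto
  have Zm: "Z n \<in> borel_measurable (Lm (Suc n))"
    using measurable_from_subalg[OF sub YZ_meas[THEN conjunct2, THEN conjunct2]] .
  have Xm: "X (Suc n) \<in> measurable (Lm (Suc n)) (count_space UNIV)"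
    unfolding X_Suc[abs_def] using Zm U_Lm by measurable
  have Om: "Obs (Suc n) \<in> measurable (Lm (Suc n)) S"
  proof -
    have "X (Suc n) -` {True} \<inter> space (Lm (Suc n)) \<in> sets (Lm (Suc n))"
      by (rule measurable_sets[OF Xm]) simp
    moreover have "X (Suc n) -` {True} \<inter> space (Lm (Suc n)) = {x \<in> space (Lm (Suc n)). X (Suc n) x}"
      by blast
    ultimately have P: "{x \<in> space (Lm (Suc n)). X (Suc n) x} \<in> sets (Lm (Suc n))" by simp
    show ?thesis unfolding Obs_def by (rule measurable_If[OF xi1_Lm xi2_Lm P])
  qed
  have G1: "X i -` A \<inter> space M \<in> sets (Lm (Suc n))" if i: "i \<in> {1..Suc n}" for i A
  proof (cases "i = Suc n")
    case True then show ?thesis using measurable_sets[OF Xm, of A] by simp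
  next
    case False
    then have "X i -` A \<inter> space M \<in> sets (F n)" using i unfolding sets_F
      by (intro sigma_sets.Basic UN_I[of i] UnI1) auto
    then show ?thesis using Suc sets_Lm_mono[of n "Suc n"] by auto
  qed
  have G2: "Obs i -` A \<inter> space M \<in> sets (Lm (Suc n))" if i: "i \<in> {1..Suc n}" and A: "A \<in> sets S" for i A
  proof (cases "i = Suc n")
    case True then show ?thesis using measurable_sets[OF Om A] by simp
  next
    case False
    then have "Obs i -` A \<inter> space M \<in> sets (F n)" using i A unfolding sets_F
      by (intro sigma_sets.Basic UN_I[of i] UnI2) auto
    then show ?thesis using Suc sets_Lm_mono[of n "Suc n"] by auto
  qed
  have G: "(\<Union>i\<in>{1..Suc n}. {X i -` A \<inter> space M |A. A \<in> sets (count_space UNIV)} \<union>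
          {Obs i -` A \<inter> space M |A. A \<in> sets S}) \<subseteq> sets (Lm (Suc n))"
    using G1 G2 by blast
  show ?case unfolding sets_F using sigma_sets_mono[OF G[unfolded sets_Lm]] sets_Lm by simp
qed

lemma sets_F_M: "sets (F n) \<subseteq> sets M"
  using sets_F_Lm sets_Lm_M by blast

lemma subalg_M: "subalgebra M (F n)"
  unfolding subalgebra_def using sets_F_M by auto


lemma E_Int_stable: "Int_stable (E i)"
proof -
  have *: "Int_stable {f -` A \<inter> space M | A. A \<in> sets N}" for f :: "'a \<Rightarrow> 'b" and N :: "'b measure"
  proof (rule Int_stableI)
    fix P Q assume "P \<in> {f -` A \<inter> space M | A. A \<in> sets N}" "Q \<in> {f -` A \<inter> space M | A. A \<in> sets N}"
    then obtain A B where "P = f -` A \<inter> space M" "Q = f -` B \<inter> space M" "A \<in> sets N" "B \<in> sets N" by auto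
    then show "P \<inter> Q \<in> {f -` A \<inter> space M | A. A \<in> sets N}"
      by (intro CollectI exI[of _ "A \<inter> B"]) auto
  qed
  show ?thesis unfolding E_def by (cases i) (simp_all add: *)
qed

lemma indep_U: "indep_set (sigma_sets (space M) {(\<lambda>x. x) -` A \<inter> space M | A. A \<in> sets (F n)})
                  (sigma_sets (space M) {U (Suc n) -` A \<inter> space M | A. A \<in> sets borel})"
proof -
  have id_meas: "(\<lambda>x. x) \<in> measurable M (F n)"
    by (rule measurableI) (use sets_F_M in auto)
  define I' where "I' = (\<lambda>j::bool. if j then Ilow n else {Unif (Suc n)})"
  have ind0: "indep_sets E {i. 1 \<le> arru_idx_num i}"
    using indep unfolding arru_indep_def E_def[abs_def] .
  have ind1: "indep_sets E (\<Union>j. I' j)"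
    by (rule indep_sets_mono_index[OF _ ind0]) (auto simp: I'_def Ilow_def)
  have ind2: "indep_sets (\<lambda>j. sigma_sets (space M) (\<Union>i\<in>I' j. E i)) UNIV"
  proof (rule indep_sets_collect_sigma[OF ind1])
    show "disjoint_family_on I' UNIV"
      unfolding disjoint_family_on_def I'_def Ilow_def by auto
  qed (rule E_Int_stable)
  show ?thesis
    unfolding indep_set_def
  proof (rule indep_sets_mono_sets[OF ind2])
    fix j :: bool
    show "case_bool (sigma_sets (space M) {(\<lambda>x. x) -` A \<inter> space M | A. A \<in> sets (F n)})
                  (sigma_sets (space M) {U (Suc n) -` A \<inter> space M | A. A \<in> sets borel}) j
          \<subseteq> sigma_sets (space M) (\<Union>i\<in>I' j. E i)"
    proof (cases j)
      case True
      have "{(\<lambda>x. x) -` A \<inter> space M | A. A \<in> sets (F n)} \<subseteq> sigma_sets (space M) (\<Union>i\<in>I' True. E i)"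
      proof
        fix B assume "B \<in> {(\<lambda>x. x) -` A \<inter> space M | A. A \<in> sets (F n)}"
        then obtain A where "B = A \<inter> space M" "A \<in> sets (F n)" by auto
        moreover have "A \<subseteq> space M" using \<open>A \<in> sets (F n)\<close> sets.sets_into_space by fastforce
        ultimately have "B = A" by auto
        then have "B \<in> sets (Lm n)" using sets_F_Lm \<open>A \<in> sets (F n)\<close> by auto
        then show "B \<in> sigma_sets (space M) (\<Union>i\<in>I' True. E i)"
          by (simp add: sets_Lm Lg_def I'_def)
      qed
      then show ?thesis using True by (simp add: sigma_sets_mono)
    next
      case False
      have "{U (Suc n) -` A \<inter> space M | A. A \<in> sets borel} = (\<Union>i\<in>I' False. E i)"
        by (simp add: I'_def E_def)
      then show ?thesis using False by simp
    qed
  qed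
qed

lemma prod_eq: "distr M (F n) (\<lambda>x. x) \<Otimes>\<^sub>M distr M borel (U (Suc n)) = distr M (F n \<Otimes>\<^sub>M borel) (\<lambda>x. (x, U (Suc n) x))"
  (is "?S \<Otimes>\<^sub>M ?T = ?J")
proof -
  have id_meas: "(\<lambda>x. x) \<in> measurable M (F n)"
    by (rule measurableI) (use sets_F_M in auto)
  have Um: "U (Suc n) \<in> borel_measurable M" using U_meas by simp
  have XY: "(\<lambda>x. (x, U (Suc n) x)) \<in> measurable M (F n \<Otimes>\<^sub>M borel)"
    using id_meas Um by (rule measurable_Pair)
  interpret X: prob_space ?S by (rule prob_space_distr) fact
  interpret Y: prob_space ?T by (rule prob_space_distr) fact
  interpret XY: pair_prob_space ?S ?T ..
  show "?S \<Otimes>\<^sub>M ?T = ?J"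
  proof (rule pair_measure_eqI)
    show "sigma_finite_measure ?S" ..
    show "sigma_finite_measure ?T" ..
    fix A B assume A: "A \<in> sets ?S" and B: "B \<in> sets ?T"
    have "emeasure ?J (A \<times> B) = emeasure M ((\<lambda>x. (x, U (Suc n) x)) -` (A \<times> B) \<inter> space M)"
      using A B by (intro emeasure_distr[OF XY]) auto
    also have "\<dots> = emeasure M (((\<lambda>x. x) -` A \<inter> space M) \<inter> (U (Suc n) -` B \<inter> space M))"
      by (intro arg_cong[where f="emeasure M"]) auto
    also have "\<dots> = emeasure M ((\<lambda>x. x) -` A \<inter> space M) * emeasure M (U (Suc n) -` B \<inter> space M)"
    proof -
      have a: "(\<lambda>x. x) -` A \<inter> space M \<in> sigma_sets (space M) {(\<lambda>x. x) -` A \<inter> space M | A. A \<in> sets (F n)}"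
        using A by (intro sigma_sets.Basic) auto
      have b: "U (Suc n) -` B \<inter> space M \<in> sigma_sets (space M) {U (Suc n) -` A \<inter> space M | A. A \<in> sets borel}"
        using B by (intro sigma_sets.Basic) auto
      show ?thesis using indep_setD[OF indep_U a b]
        by (simp add: emeasure_eq_measure measure_nonneg ennreal_mult)
    qed
    also have "\<dots> = emeasure ?S A * emeasure ?T B"
      using id_meas Um A B by (simp add: emeasure_distr)
    finally show "emeasure ?S A * emeasure ?T B = emeasure ?J (A \<times> B)" by simp
  qed simp
qed

lemma uniform_eq: "distr M borel (U (Suc n)) = uniform_measure lborel {0<..<1}"
proof -
  have "distr M borel (U (Suc n)) = distr M lborel (U (Suc n))" by (rule distr_cong) simp_all
  then show ?thesis using U_distr[of "Suc n"] by simp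
qed

lemma core:
  assumes PA: "Measurable.pred (F n) PA" and P1: "Measurable.pred (F n) P1"
    and P2: "Measurable.pred (F n) P2" and g: "g \<in> borel_measurable (F n)"
    and bnd: "\<And>\<omega>. \<omega> \<in> space M \<Longrightarrow> PA \<omega> \<Longrightarrow> 0 \<le> g \<omega> \<and> g \<omega> \<le> 1 \<and>
          (if P1 \<omega> then g \<omega> else 0) + (if P2 \<omega> then 1 - g \<omega> else 0) \<le> c"
    and c: "0 \<le> c"
  shows "emeasure M {\<omega>\<in>space M. PA \<omega> \<and> (U (Suc n) \<omega> < g \<omega> \<longrightarrow> P1 \<omega>) \<and> (\<not> U (Suc n) \<omega> < g \<omega> \<longrightarrow> P2 \<omega>)}
         \<le> ennreal c * emeasure M {\<omega>\<in>space M. PA \<omega>}"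
proof -
  let ?U = "U (Suc n)"
  define Q where "Q = (\<lambda>x::'a \<times> real. PA (fst x) \<and> (snd x < g (fst x) \<longrightarrow> P1 (fst x)) \<and> (\<not> snd x < g (fst x) \<longrightarrow> P2 (fst x)))"
  define T where "T = {x\<in>space (F n \<Otimes>\<^sub>M borel). Q x}"
  have Qm: "Measurable.pred (F n \<Otimes>\<^sub>M borel) Q" unfolding Q_def using PA P1 P2 g by measurable
  have T: "T \<in> sets (F n \<Otimes>\<^sub>M borel)" unfolding T_def using Qm by (simp add: Measurable.pred_def)
  have id_meas: "(\<lambda>x. x) \<in> measurable M (F n)"
    by (rule measurableI) (use sets_F_M in auto)
  have pm: "(\<lambda>x. (x, ?U x)) \<in> measurable M (F n \<Otimes>\<^sub>M borel)"
    using id_meas U_meas[of "Suc n"] by (intro measurable_Pair) auto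
  have eq: "distr M (F n) (\<lambda>x. x) \<Otimes>\<^sub>M distr M borel ?U = distr M (F n \<Otimes>\<^sub>M borel) (\<lambda>x. (x, ?U x))"
    by (rule prod_eq)
  interpret sf: sigma_finite_measure "distr M borel ?U"
    by (rule prob_space_imp_sigma_finite, rule prob_space_distr) (use U_meas[of "Suc n"] in simp)
  have set_eq: "{\<omega>\<in>space M. PA \<omega> \<and> (?U \<omega> < g \<omega> \<longrightarrow> P1 \<omega>) \<and> (\<not> ?U \<omega> < g \<omega> \<longrightarrow> P2 \<omega>)}
      = (\<lambda>x. (x, ?U x)) -` T \<inter> space M"
    unfolding T_def Q_def by (auto simp: space_pair_measure)
  have "emeasure M {\<omega>\<in>space M. PA \<omega> \<and> (?U \<omega> < g \<omega> \<longrightarrow> P1 \<omega>) \<and> (\<not> ?U \<omega> < g \<omega> \<longrightarrow> P2 \<omega>)}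
      = emeasure (distr M (F n \<Otimes>\<^sub>M borel) (\<lambda>x. (x, ?U x))) T"
    unfolding set_eq by (rule emeasure_distr[OF pm T, symmetric])
  also have "\<dots> = emeasure (distr M (F n) (\<lambda>x. x) \<Otimes>\<^sub>M distr M borel ?U) T" by (simp add: eq)
  also have "\<dots> = (\<integral>\<^sup>+x. emeasure (distr M borel ?U) (Pair x -` T) \<partial>distr M (F n) (\<lambda>x. x))"
    by (rule sf.emeasure_pair_measure_alt) (use T in simp)
  also have "\<dots> \<le> (\<integral>\<^sup>+x. ennreal c * indicator {\<omega>\<in>space M. PA \<omega>} x \<partial>distr M (F n) (\<lambda>x. x))"
  proof (rule nn_integral_mono)
    fix x assume x: "x \<in> space (distr M (F n) (\<lambda>x. x))"
    then have xM: "x \<in> space M" by simp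
    have sec: "Pair x -` T = {u. Q (x, u)}" unfolding T_def using xM by (auto simp: space_pair_measure)
    have secm: "Pair x -` T \<in> sets borel" using T by (rule sets_Pair1)
    show "emeasure (distr M borel ?U) (Pair x -` T) \<le> ennreal c * indicator {\<omega>\<in>space M. PA \<omega>} x"
    proof (cases "PA x")
      case False
      then have "Pair x -` T = {}" unfolding sec Q_def by auto
      then show ?thesis by simp
    next
      case True
      note b = bnd[OF xM True]
      have "emeasure (distr M borel ?U) (Pair x -` T) = emeasure lborel ({0<..<1} \<inter> Pair x -` T)"
        using secm by (simp add: uniform_eq divide_ennreal_def)
      also have "\<dots> \<le> emeasure lborel ((if P1 x then {0..g x} else {}) \<union> (if P2 x then {g x..1} else {}))"
        by (rule emeasure_mono) (auto simp: sec Q_def True split: if_splits)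
      also have "\<dots> \<le> emeasure lborel (if P1 x then {0..g x} else {}) + emeasure lborel (if P2 x then {g x..1} else {})"
        by (rule emeasure_subadditive) auto
      also have "\<dots> = ennreal (if P1 x then g x else 0) + ennreal (if P2 x then 1 - g x else 0)"
        using b by auto
      also have "\<dots> = ennreal ((if P1 x then g x else 0) + (if P2 x then 1 - g x else 0))"
        using b by (intro ennreal_plus[symmetric]) auto
      also have "\<dots> \<le> ennreal c" using b by (intro ennreal_leI) auto
      finally show ?thesis using True xM by simp
    qed
  qed
  also have "\<dots> = ennreal c * emeasure (distr M (F n) (\<lambda>x. x)) {\<omega>\<in>space M. PA \<omega>}"
    by (rule nn_integral_cmult_indicator) (use PA in \<open>simp add: Measurable.pred_def\<close>)
  also have "\<dots> = ennreal c * emeasure M {\<omega>\<in>space M. PA \<omega>}"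
  proof -
    have e: "{\<omega>\<in>space M. PA \<omega>} \<inter> space M = {\<omega>\<in>space M. PA \<omega>}" by blast
    show ?thesis using PA id_meas by (subst emeasure_distr) (auto simp: Measurable.pred_def e)
  qed
  finally show ?thesis .
qed

lemma pred_X_le: "i \<le> n \<Longrightarrow> Measurable.pred (F n) (X i)"
proof (cases i)
  case 0
  then have "X i = (\<lambda>_. False)" by (auto simp: X_0)
  then show ?thesis by simp
next
  case (Suc j)
  assume "i \<le> n"
  then show ?thesis using measurable_from_subalg[OF subalg_F X_meas[of j]] Suc by simp
qed

lemma meas_le: "m \<le> n \<Longrightarrow> f \<in> borel_measurable (F m) \<Longrightarrow> f \<in> borel_measurable (F n)"
  using measurable_from_subalg[OF subalg_F] by blast

lemma pred_M: "Measurable.pred (F n) P \<Longrightarrow> Measurable.pred M P"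
  using measurable_from_subalg[OF subalg_M] by blast

lemma Z_lower:
  assumes "\<omega> \<in> space M"
  shows "y10 / (y10 + y20 + b * n) \<le> Z n \<omega> \<and> y20 / (y10 + y20 + b * n) \<le> 1 - Z n \<omega>"
proof -
  have B: "y10 \<le> Y1 n \<omega>" "y20 \<le> Y2 n \<omega>" "Y1 n \<omega> + Y2 n \<omega> \<le> y10 + y20 + b * n"
    using Y_bounds[OF assms, of n] by auto
  have pos: "0 < Y1 n \<omega> + Y2 n \<omega>" using B y0 by linarith
  have "y10 / (y10 + y20 + b * n) \<le> Y1 n \<omega> / (Y1 n \<omega> + Y2 n \<omega>)"
    by (rule frac_le) (use B y0 pos in auto)
  moreover have "y20 / (y10 + y20 + b * n) \<le> Y2 n \<omega> / (Y1 n \<omega> + Y2 n \<omega>)"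
    by (rule frac_le) (use B y0 pos in auto)
  moreover have "1 - Z n \<omega> = Y2 n \<omega> / (Y1 n \<omega> + Y2 n \<omega>)"
    unfolding Z_def using pos by (simp add: field_simps)
  ultimately show ?thesis unfolding Z_def by simp
qed

definition "q1 j = y10 / (y10 + y20 + b * real j)"
definition "q2 j = y20 / (y10 + y20 + b * real j)"

lemma q_bounds: "0 \<le> q1 j \<and> q1 j \<le> 1 \<and> 0 \<le> q2 j \<and> q2 j \<le> 1"
proof -
  have "0 \<le> b * real j" using ab by simp
  then have "0 < y10 + y20 + b * real j" "y10 \<le> y10 + y20 + b * real j" "y20 \<le> y10 + y20 + b * real j"
    using y0 by linarith+
  then show ?thesis using y0 unfolding q1_def q2_def by simp
qed

lemma b1_bound:
  "emeasure M {\<omega>\<in>space M. \<forall>i<k. \<not> X (Suc (m+i)) \<omega>} \<le> ennreal (\<Prod>i<k. 1 - q1 (m+i))"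
proof (induction k)
  case 0 then show ?case using emeasure_space_1 by (simp add: emeasure_mono order_trans[OF emeasure_mono])
next
  case (Suc k)
  let ?n = "m + k"
  have PA: "Measurable.pred (F ?n) (\<lambda>\<omega>. \<forall>i<k. \<not> X (Suc (m+i)) \<omega>)"
    by (intro pred_all_less) (use pred_X_le in \<open>auto intro: pred_intros_logic\<close>)
  have g: "Z ?n \<in> borel_measurable (F ?n)" using YZ_meas by blast
  have c: "0 \<le> 1 - q1 ?n" using q_bounds by auto
  have "emeasure M {\<omega>\<in>space M. \<forall>i<Suc k. \<not> X (Suc (m+i)) \<omega>}
     = emeasure M {\<omega>\<in>space M. (\<forall>i<k. \<not> X (Suc (m+i)) \<omega>) \<and> (U (Suc ?n) \<omega> < Z ?n \<omega> \<longrightarrow> False) \<and> (\<not> U (Suc ?n) \<omega> < Z ?n \<omega> \<longrightarrow> True)}"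
    by (intro arg_cong[where f="emeasure M"]) (auto simp: less_Suc_eq X_Suc)
  also have "\<dots> \<le> ennreal (1 - q1 ?n) * emeasure M {\<omega>\<in>space M. \<forall>i<k. \<not> X (Suc (m+i)) \<omega>}"
  proof (rule core[OF PA _ _ g _ c])
    fix \<omega> assume "\<omega> \<in> space M"
    then show "0 \<le> Z ?n \<omega> \<and> Z ?n \<omega> \<le> 1 \<and> (if False then Z ?n \<omega> else 0) + (if True then 1 - Z ?n \<omega> else 0) \<le> 1 - q1 ?n"
      using Z_bounds[of \<omega> ?n] Z_lower[of \<omega> ?n] by (simp add: q1_def)
  qed simp_all
  also have "\<dots> \<le> ennreal (1 - q1 ?n) * ennreal (\<Prod>i<k. 1 - q1 (m+i))"
    by (rule mult_left_mono[OF Suc]) simp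
  also have "\<dots> = ennreal (\<Prod>i<Suc k. 1 - q1 (m+i))"
    using c q_bounds by (simp add: ennreal_mult[symmetric] prod_nonneg mult.commute)
  finally show ?case .
qed

lemma b2_bound:
  "emeasure M {\<omega>\<in>space M. \<forall>i<k. X (Suc (m+i)) \<omega>} \<le> ennreal (\<Prod>i<k. 1 - q2 (m+i))"
proof (induction k)
  case 0 then show ?case using emeasure_space_1 by (simp add: emeasure_mono order_trans[OF emeasure_mono])
next
  case (Suc k)
  let ?n = "m + k"
  have PA: "Measurable.pred (F ?n) (\<lambda>\<omega>. \<forall>i<k. X (Suc (m+i)) \<omega>)"
    by (intro pred_all_less) (use pred_X_le in auto)
  have g: "Z ?n \<in> borel_measurable (F ?n)" using YZ_meas by blast
  have c: "0 \<le> 1 - q2 ?n" using q_bounds by auto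
  have "emeasure M {\<omega>\<in>space M. \<forall>i<Suc k. X (Suc (m+i)) \<omega>}
     = emeasure M {\<omega>\<in>space M. (\<forall>i<k. X (Suc (m+i)) \<omega>) \<and> (U (Suc ?n) \<omega> < Z ?n \<omega> \<longrightarrow> True) \<and> (\<not> U (Suc ?n) \<omega> < Z ?n \<omega> \<longrightarrow> False)}"
    by (intro arg_cong[where f="emeasure M"]) (auto simp: less_Suc_eq X_Suc)
  also have "\<dots> \<le> ennreal (1 - q2 ?n) * emeasure M {\<omega>\<in>space M. \<forall>i<k. X (Suc (m+i)) \<omega>}"
  proof (rule core[OF PA _ _ g _ c])
    fix \<omega> assume "\<omega> \<in> space M"
    then show "0 \<le> Z ?n \<omega> \<and> Z ?n \<omega> \<le> 1 \<and> (if True then Z ?n \<omega> else 0) + (if False then 1 - Z ?n \<omega> else 0) \<le> 1 - q2 ?n"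
      using Z_bounds[of \<omega> ?n] Z_lower[of \<omega> ?n] by (simp add: q2_def)
  qed simp_all
  also have "\<dots> \<le> ennreal (1 - q2 ?n) * ennreal (\<Prod>i<k. 1 - q2 (m+i))"
    by (rule mult_left_mono[OF Suc]) simp
  also have "\<dots> = ennreal (\<Prod>i<Suc k. 1 - q2 (m+i))"
    using c q_bounds by (simp add: ennreal_mult[symmetric] prod_nonneg mult.commute)
  finally show ?case .
qed

lemma pred_XM: "Measurable.pred M (X j)"
  using pred_M[OF pred_X_le[of j j]] by simp

lemma part_b:
  "AE \<omega> in M. filterlim (\<lambda>n. min (card {i\<in>{1..n}. X i \<omega>}) (card {i\<in>{1..n}. \<not> X i \<omega>})) at_top sequentially"
proof -
  have bpos: "0 < b" using ab by simp
  have y0s: "0 < y10 + y20" using y0 by simp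
  have N1: "{\<omega>\<in>space M. \<forall>k. \<not> X (Suc (m+k)) \<omega>} \<in> null_sets M" for m
  proof (rule null_from_bound)
    show "{\<omega>\<in>space M. \<forall>k. \<not> X (Suc (m+k)) \<omega>} \<in> sets M" using pred_XM by measurable
    fix k
    have "emeasure M {\<omega>\<in>space M. \<forall>k. \<not> X (Suc (m+k)) \<omega>} \<le> emeasure M {\<omega>\<in>space M. \<forall>i<k. \<not> X (Suc (m+i)) \<omega>}"
      by (rule emeasure_mono) (use pred_XM in \<open>auto intro!: pred_all_less simp: Measurable.pred_def[symmetric]\<close>)
    also have "\<dots> \<le> ennreal (\<Prod>i<k. 1 - q1 (m+i))" by (rule b1_bound)
    finally show "emeasure M {\<omega>\<in>space M. \<forall>k. \<not> X (Suc (m+k)) \<omega>} \<le> ennreal (\<Prod>i<k. 1 - q1 (m+i))" .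
  next
    fix e :: real assume "0 < e"
    show "\<exists>k. (\<Prod>i<k. 1 - q1 (m+i)) < e"
    proof (rule prod_small[where q="\<lambda>i. q1 (m+i)", OF _ _ _ \<open>0 < e\<close>])
      show "\<And>K. \<exists>k. K \<le> (\<Sum>i<k. q1 (m + i))" unfolding q1_def by (rule div_q[OF y0(1) y0s bpos])
    qed (use q_bounds in blast)+
  qed
  have N2: "{\<omega>\<in>space M. \<forall>k. X (Suc (m+k)) \<omega>} \<in> null_sets M" for m
  proof (rule null_from_bound)
    show "{\<omega>\<in>space M. \<forall>k. X (Suc (m+k)) \<omega>} \<in> sets M" using pred_XM by measurable
    fix k
    have "emeasure M {\<omega>\<in>space M. \<forall>k. X (Suc (m+k)) \<omega>} \<le> emeasure M {\<omega>\<in>space M. \<forall>i<k. X (Suc (m+i)) \<omega>}"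
      by (rule emeasure_mono) (use pred_XM in \<open>auto intro!: pred_all_less simp: Measurable.pred_def[symmetric]\<close>)
    also have "\<dots> \<le> ennreal (\<Prod>i<k. 1 - q2 (m+i))" by (rule b2_bound)
    finally show "emeasure M {\<omega>\<in>space M. \<forall>k. X (Suc (m+k)) \<omega>} \<le> ennreal (\<Prod>i<k. 1 - q2 (m+i))" .
  next
    fix e :: real assume "0 < e"
    show "\<exists>k. (\<Prod>i<k. 1 - q2 (m+i)) < e"
    proof (rule prod_small[where q="\<lambda>i. q2 (m+i)", OF _ _ _ \<open>0 < e\<close>])
      show "\<And>K. \<exists>k. K \<le> (\<Sum>i<k. q2 (m + i))" unfolding q2_def by (rule div_q[OF y0(2) y0s bpos])
    qed (use q_bounds in blast)+
  qed
  have "AE \<omega> in M. \<forall>m. \<omega> \<notin> {\<omega>\<in>space M. \<forall>k. \<not> X (Suc (m+k)) \<omega>} \<and> \<omega> \<notin> {\<omega>\<in>space M. \<forall>k. X (Suc (m+k)) \<omega>}"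
    unfolding AE_all_countable using AE_not_in[OF N1] AE_not_in[OF N2] by auto
  then show ?thesis
  proof (rule AE_mp[OF _ AE_I2], intro impI)
    fix \<omega> assume \<omega>: "\<omega> \<in> space M"
      and H: "\<forall>m. \<omega> \<notin> {\<omega>\<in>space M. \<forall>k. \<not> X (Suc (m+k)) \<omega>} \<and> \<omega> \<notin> {\<omega>\<in>space M. \<forall>k. X (Suc (m+k)) \<omega>}"
    have i1: "\<exists>i>m. X i \<omega>" for m
    proof -
      obtain k where "X (Suc (m + k)) \<omega>" using H \<omega> by auto
      then show ?thesis by (intro exI[of _ "Suc (m + k)"]) auto
    qed
    have i2: "\<exists>i>m. \<not> X i \<omega>" for m
    proof -
      obtain k where "\<not> X (Suc (m + k)) \<omega>" using H \<omega> by auto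
      then show ?thesis by (intro exI[of _ "Suc (m + k)"]) auto
    qed
    have t1: "filterlim (\<lambda>n. card {i\<in>{1..n}. X i \<omega>}) at_top sequentially" by (rule card_tendsto) (rule i1)
    have t2: "filterlim (\<lambda>n. card {i\<in>{1..n}. \<not> X i \<omega>}) at_top sequentially" by (rule card_tendsto) (rule i2)
    show "filterlim (\<lambda>n. min (card {i\<in>{1..n}. X i \<omega>}) (card {i\<in>{1..n}. \<not> X i \<omega>})) at_top sequentially"
      unfolding filterlim_at_top
    proof
      fix K
      show "\<forall>\<^sub>F n in sequentially. K \<le> min (card {i\<in>{1..n}. X i \<omega>}) (card {i\<in>{1..n}. \<not> X i \<omega>})"
      proof -
        have "\<forall>\<^sub>F n in sequentially. K \<le> card {i\<in>{1..n}. X i \<omega>}" using t1 unfolding filterlim_at_top by blast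
        moreover have "\<forall>\<^sub>F n in sequentially. K \<le> card {i\<in>{1..n}. \<not> X i \<omega>}" using t2 unfolding filterlim_at_top by blast
        ultimately show ?thesis by eventually_elim simp
      qed
    qed
  qed
qed

definition "Aa m \<delta> k \<omega> = ((\<forall>i<Suc k. Y1 (m+i) \<omega> = Y1 m \<omega> \<and> Y2 (m+i) \<omega> = Y2 m \<omega>) \<and>
   \<delta> \<le> Z m \<omega> \<and> Z m \<omega> \<le> 1 - \<delta> \<and> (\<forall>i<m+k. rho2 i \<omega> \<le> rho1 i \<omega>))"

lemma Aa_pred: "Measurable.pred (F (m+k)) (Aa m \<delta> k)"
proof -
  have Y: "Measurable.pred (F (m+k)) (\<lambda>\<omega>. Y1 (m+i) \<omega> = Y1 m \<omega> \<and> Y2 (m+i) \<omega> = Y2 m \<omega>)" if "i < Suc k" for i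
  proof -
    have "Y1 (m+i) \<in> borel_measurable (F (m+k))" "Y2 (m+i) \<in> borel_measurable (F (m+k))"
      "Y1 m \<in> borel_measurable (F (m+k))" "Y2 m \<in> borel_measurable (F (m+k))"
      using that YZ_meas meas_le by (meson le_add1 less_Suc_eq_le add_le_cancel_left)+
    then show ?thesis by measurable
  qed
  have R: "Measurable.pred (F (m+k)) (\<lambda>\<omega>. rho2 i \<omega> \<le> rho1 i \<omega>)" if "i < m+k" for i
  proof -
    have "rho1 i \<in> borel_measurable (F (m+k))" "rho2 i \<in> borel_measurable (F (m+k))"
      using that rho_meas meas_le by (meson less_imp_le)+
    then show ?thesis by measurable
  qed
  have Zm: "Z m \<in> borel_measurable (F (m+k))" using YZ_meas meas_le by (meson le_add1)
  have A: "Measurable.pred (F (m+k)) (\<lambda>\<omega>. \<forall>i<Suc k. Y1 (m+i) \<omega> = Y1 m \<omega> \<and> Y2 (m+i) \<omega> = Y2 m \<omega>)"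
    by (rule pred_all_less) (rule Y)
  have B: "Measurable.pred (F (m+k)) (\<lambda>\<omega>. \<forall>i<m+k. rho2 i \<omega> \<le> rho1 i \<omega>)"
    by (rule pred_all_less) (rule R)
  show ?thesis unfolding Aa_def[abs_def] using A B Zm by measurable
qed

lemma a_bound:
  assumes d: "0 \<le> \<delta>" "\<delta> \<le> 1"
  shows "emeasure M {\<omega>\<in>space M. Aa m \<delta> k \<omega>} \<le> ennreal ((1 - \<delta>) ^ k)"
proof (induction k)
  case 0 then show ?case using emeasure_le_1 by simp
next
  case (Suc k)
  let ?n = "m + k"
  define PA where "PA = (\<lambda>\<omega>. Aa m \<delta> k \<omega> \<and> rho2 ?n \<omega> \<le> rho1 ?n \<omega>)"
  have PAm: "Measurable.pred (F ?n) PA"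
  proof -
    have "rho1 ?n \<in> borel_measurable (F ?n)" "rho2 ?n \<in> borel_measurable (F ?n)" using rho_meas by auto
    then show ?thesis unfolding PA_def using Aa_pred[where m=m and k=k and \<delta>=\<delta>] by measurable
  qed
  have g: "Z ?n \<in> borel_measurable (F ?n)" using YZ_meas by blast
  have P1: "Measurable.pred (F ?n) (\<lambda>\<omega>. \<not> Z ?n \<omega> \<le> rho1 ?n \<omega>)"
    using g rho_meas(1)[of ?n] by measurable
  have P2: "Measurable.pred (F ?n) (\<lambda>\<omega>. \<not> rho2 ?n \<omega> \<le> Z ?n \<omega>)"
    using g rho_meas(2)[of ?n] by measurable
  have c: "0 \<le> 1 - \<delta>" using d by simp
  have sub: "{\<omega>\<in>space M. Aa m \<delta> (Suc k) \<omega>} \<subseteq>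
     {\<omega>\<in>space M. PA \<omega> \<and> (U (Suc ?n) \<omega> < Z ?n \<omega> \<longrightarrow> \<not> Z ?n \<omega> \<le> rho1 ?n \<omega>) \<and> (\<not> U (Suc ?n) \<omega> < Z ?n \<omega> \<longrightarrow> \<not> rho2 ?n \<omega> \<le> Z ?n \<omega>)}"
  proof safe
    fix \<omega> assume \<omega>: "\<omega> \<in> space M" and A: "Aa m \<delta> (Suc k) \<omega>"
    have eq: "Y1 (Suc ?n) \<omega> = Y1 ?n \<omega>" "Y2 (Suc ?n) \<omega> = Y2 ?n \<omega>"
      using A unfolding Aa_def
      by (metis add_Suc_right lessI less_SucI)+
    have ua: "0 < u (Obs (Suc ?n) \<omega>)" using u_Obs[OF \<omega>, of ?n] ab by linarith
    show "PA \<omega>" using A unfolding PA_def Aa_def by (auto simp: less_Suc_eq)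
    show False if "U (Suc ?n) \<omega> < Z ?n \<omega>" "Z ?n \<omega> \<le> rho1 ?n \<omega>"
      using that eq(1) ua unfolding Y1_Suc X_Suc by simp
    show False if "\<not> U (Suc ?n) \<omega> < Z ?n \<omega>" "rho2 ?n \<omega> \<le> Z ?n \<omega>"
      using that eq(2) ua unfolding Y2_Suc X_Suc by simp
  qed
  have "emeasure M {\<omega>\<in>space M. Aa m \<delta> (Suc k) \<omega>} \<le>
     emeasure M {\<omega>\<in>space M. PA \<omega> \<and> (U (Suc ?n) \<omega> < Z ?n \<omega> \<longrightarrow> \<not> Z ?n \<omega> \<le> rho1 ?n \<omega>) \<and> (\<not> U (Suc ?n) \<omega> < Z ?n \<omega> \<longrightarrow> \<not> rho2 ?n \<omega> \<le> Z ?n \<omega>)}"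
  proof (rule emeasure_mono[OF sub])
    have ZM: "Z ?n \<in> borel_measurable M" using measurable_from_subalg[OF subalg_M g] .
    have UM: "U (Suc ?n) \<in> borel_measurable M" using U_meas by simp
    have "Measurable.pred M (\<lambda>\<omega>. PA \<omega> \<and> (U (Suc ?n) \<omega> < Z ?n \<omega> \<longrightarrow> \<not> Z ?n \<omega> \<le> rho1 ?n \<omega>) \<and> (\<not> U (Suc ?n) \<omega> < Z ?n \<omega> \<longrightarrow> \<not> rho2 ?n \<omega> \<le> Z ?n \<omega>))"
      using pred_M[OF PAm] pred_M[OF P1] pred_M[OF P2] ZM UM by measurable
    then show "{\<omega>\<in>space M. PA \<omega> \<and> (U (Suc ?n) \<omega> < Z ?n \<omega> \<longrightarrow> \<not> Z ?n \<omega> \<le> rho1 ?n \<omega>) \<and> (\<not> U (Suc ?n) \<omega> < Z ?n \<omega> \<longrightarrow> \<not> rho2 ?n \<omega> \<le> Z ?n \<omega>)} \<in> sets M"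
      by (simp add: Measurable.pred_def)
  qed
  also have "\<dots> \<le> ennreal (1 - \<delta>) * emeasure M {\<omega>\<in>space M. PA \<omega>}"
  proof (rule core[OF PAm P1 P2 g _ c])
    fix \<omega> assume \<omega>: "\<omega> \<in> space M" and PA: "PA \<omega>"
    have Zeq: "Z ?n \<omega> = Z m \<omega>" using PA unfolding PA_def Aa_def Z_def by auto
    have "\<delta> \<le> Z m \<omega>" "Z m \<omega> \<le> 1 - \<delta>" "rho2 ?n \<omega> \<le> rho1 ?n \<omega>" using PA unfolding PA_def Aa_def by auto
    then show "0 \<le> Z ?n \<omega> \<and> Z ?n \<omega> \<le> 1 \<and> (if \<not> Z ?n \<omega> \<le> rho1 ?n \<omega> then Z ?n \<omega> else 0) +
        (if \<not> rho2 ?n \<omega> \<le> Z ?n \<omega> then 1 - Z ?n \<omega> else 0) \<le> 1 - \<delta>"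
      using Zeq Z_bounds[OF \<omega>, of ?n] d by auto
  qed
  also have "\<dots> \<le> ennreal (1 - \<delta>) * emeasure M {\<omega>\<in>space M. Aa m \<delta> k \<omega>}"
    by (intro mult_left_mono emeasure_mono) (use pred_M[OF Aa_pred] in \<open>auto simp: PA_def Measurable.pred_def\<close>)
  also have "\<dots> \<le> ennreal (1 - \<delta>) * ennreal ((1 - \<delta>) ^ k)"
    by (rule mult_left_mono[OF Suc]) simp
  also have "\<dots> = ennreal ((1 - \<delta>) ^ Suc k)"
    using c by (simp add: ennreal_mult[symmetric])
  finally show ?case .
qed

lemma S_stab:
  assumes \<omega>: "\<omega> \<in> space M"
    and nl: "\<not> filterlim (\<lambda>n. Y1 n \<omega> + Y2 n \<omega>) at_top sequentially"
  shows "\<exists>m. \<forall>k. Y1 (m+k) \<omega> = Y1 m \<omega> \<and> Y2 (m+k) \<omega> = Y2 m \<omega>"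
proof -
  define S where "S n = Y1 n \<omega> + Y2 n \<omega>" for n
  have i1: "incseq (\<lambda>n. Y1 n \<omega>)" by (rule incseq_SucI) (rule Y1_mono_step[OF \<omega>])
  have i2: "incseq (\<lambda>n. Y2 n \<omega>)" by (rule incseq_SucI) (rule Y2_mono_step[OF \<omega>])
  have iS: "S n \<le> S n'" if "n \<le> n'" for n n'
  proof -
    have "Y1 n \<omega> \<le> Y1 n' \<omega>" "Y2 n \<omega> \<le> Y2 n' \<omega>" using i1 i2 that unfolding incseq_def by auto
    then show ?thesis unfolding S_def by linarith
  qed
  obtain K where K: "\<not> (\<forall>\<^sub>F n in sequentially. K \<le> S n)"
    using nl unfolding filterlim_at_top S_def by blast
  have bnd: "S n < K" for n
  proof (rule ccontr)
    assume "\<not> S n < K"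
    have "\<forall>n'\<ge>n. K \<le> S n'"
    proof (intro allI impI)
      fix n' assume "n \<le> n'" then show "K \<le> S n'" using iS[of n n'] \<open>\<not> S n < K\<close> by linarith
    qed
    then show False using K unfolding eventually_sequentially by blast
  qed
  have jump: "S n + a \<le> S (Suc n)" if "S (Suc n) \<noteq> S n" for n
  proof -
    have "a \<le> u (Obs (Suc n) \<omega>)" using u_Obs[OF \<omega>, of n] by simp
    then show ?thesis using that ab unfolding S_def Y1_Suc Y2_Suc by (simp split: if_splits)
  qed
  have gap: "S (m+k) \<noteq> S m \<Longrightarrow> S m + a \<le> S (m+k)" for m k
  proof (induction k)
    case 0 then show ?case by simp
  next
    case (Suc k)
    show ?case
    proof (cases "S (m+k) = S m")
      case True
      then have "S (Suc (m+k)) \<noteq> S (m+k)" using Suc.prems by simp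
      then show ?thesis using jump[of "m+k"] True by simp
    next
      case False
      then show ?thesis using Suc.IH iS[of "m+k" "Suc (m+k)"] by simp
    qed
  qed
  have ex: "\<exists>m. \<forall>k. S (m+k) = S m"
  proof (rule ccontr)
    assume "\<not> ?thesis"
    then have step: "\<forall>m. \<exists>k. S m + a \<le> S (m+k)" using gap by blast
    have grow: "\<exists>n. S 0 + real j * a \<le> S n" for j
    proof (induction j)
      case 0 then show ?case by auto
    next
      case (Suc j)
      then obtain n where "S 0 + real j * a \<le> S n" by blast
      moreover obtain k where "S n + a \<le> S (n+k)" using step by blast
      ultimately show ?case by (intro exI[of _ "n+k"]) (simp add: algebra_simps)
    qed
    obtain j :: nat where j: "(K - S 0) / a < j" using reals_Archimedean2 by blast
    then have "K < S 0 + real j * a" using ab by (simp add: field_simps)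
    moreover obtain n where "S 0 + real j * a \<le> S n" using grow[of j] by blast
    ultimately show False using bnd[of n] by linarith
  qed
  then obtain m where m: "\<forall>k. S (m+k) = S m" by blast
  show ?thesis
  proof (intro exI[of _ m] allI)
    fix k
    have "Y1 m \<omega> \<le> Y1 (m+k) \<omega>" "Y2 m \<omega> \<le> Y2 (m+k) \<omega>" using i1 i2 unfolding incseq_def by auto
    then show "Y1 (m+k) \<omega> = Y1 m \<omega> \<and> Y2 (m+k) \<omega> = Y2 m \<omega>" using m[rule_format, of k] unfolding S_def by linarith
  qed
qed

lemma part_a: "AE \<omega> in M. filterlim (\<lambda>n. Y1 n \<omega> + Y2 n \<omega>) at_top sequentially"
proof -
  define dl where "dl j = inverse (real (Suc j))" for j
  have dl: "0 < dl j" "dl j \<le> 1" for j unfolding dl_def by (auto simp: field_simps)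
  have N: "{\<omega>\<in>space M. \<forall>k. Aa m (dl j) k \<omega>} \<in> null_sets M" for m j
  proof (rule null_from_bound)
    have "\<And>k. Measurable.pred M (Aa m (dl j) k)" using pred_M[OF Aa_pred] by blast
    then show "{\<omega>\<in>space M. \<forall>k. Aa m (dl j) k \<omega>} \<in> sets M" by measurable
  next
    fix k
    have "emeasure M {\<omega>\<in>space M. \<forall>k. Aa m (dl j) k \<omega>} \<le> emeasure M {\<omega>\<in>space M. Aa m (dl j) k \<omega>}"
      by (rule emeasure_mono) (use pred_M[OF Aa_pred] in \<open>auto simp: Measurable.pred_def\<close>)
    also have "\<dots> \<le> ennreal ((1 - dl j) ^ k)" by (rule a_bound) (use dl[of j] in auto)
    finally show "emeasure M {\<omega>\<in>space M. \<forall>k. Aa m (dl j) k \<omega>} \<le> ennreal ((1 - dl j) ^ k)" .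
  next
    fix e :: real assume "0 < e"
    then show "\<exists>k. (1 - dl j) ^ k < e" using real_arch_pow_inv[of e "1 - dl j"] dl[of j] by simp
  qed
  have AE1: "AE \<omega> in M. \<forall>m j. \<omega> \<notin> {\<omega>\<in>space M. \<forall>k. Aa m (dl j) k \<omega>}"
    unfolding AE_all_countable using AE_not_in[OF N] by blast
  have AE2: "AE \<omega> in M. \<forall>i. rho2 i \<omega> \<le> rho1 i \<omega>"
    unfolding AE_all_countable using rho_order by blast
  show ?thesis
    using AE1 AE2 AE_space
  proof (eventually_elim)
    case (elim \<omega>)
    show ?case
    proof (rule ccontr)
      have \<omega>: "\<omega> \<in> space M" using elim(3) .
      assume nl: "\<not> filterlim (\<lambda>n. Y1 n \<omega> + Y2 n \<omega>) at_top sequentially"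
      obtain m where m: "\<forall>k. Y1 (m+k) \<omega> = Y1 m \<omega> \<and> Y2 (m+k) \<omega> = Y2 m \<omega>"
        using S_stab[OF \<omega> nl] by blast
      have "0 < min (Z m \<omega>) (1 - Z m \<omega>)" using Z_bounds[OF \<omega>, of m] by simp
      then obtain n :: nat where n: "n > 0" "inverse (real n) < min (Z m \<omega>) (1 - Z m \<omega>)"
        using ex_inverse_of_nat_less by blast
      define j where "j = n - 1"
      have dj: "dl j = inverse (real n)" unfolding dl_def j_def using n by simp
      have "\<forall>k. Aa m (dl j) k \<omega>"
        unfolding Aa_def using m n elim(2) dj by auto
      then show False using elim(1) \<omega> by blast
    qed
  qed
qed

end

theorem lemma4p2:
  fixes M :: "'a measure" and S :: "'s measure" and mu1 mu2 :: "'s measure"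
    and u :: "'s \<Rightarrow> real" and a b y10 y20 :: real
    and xi1 xi2 :: "nat \<Rightarrow> 'a \<Rightarrow> 's" and U :: "nat \<Rightarrow> 'a \<Rightarrow> real"
    and rho1 rho2 :: "nat \<Rightarrow> 'a \<Rightarrow> real"
  defines "Yp \<equiv> \<lambda>\<omega>. arru_Y y10 y20 (\<lambda>n. u (xi1 n \<omega>)) (\<lambda>n. u (xi2 n \<omega>)) (\<lambda>n. U n \<omega>)
                     (\<lambda>n. rho1 n \<omega>) (\<lambda>n. rho2 n \<omega>)"
  defines "X \<equiv> \<lambda>n \<omega>. arru_X y10 y20 (\<lambda>n. u (xi1 n \<omega>)) (\<lambda>n. u (xi2 n \<omega>)) (\<lambda>n. U n \<omega>)
                     (\<lambda>n. rho1 n \<omega>) (\<lambda>n. rho2 n \<omega>) n"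
  defines "Obs \<equiv> \<lambda>n \<omega>. if X n \<omega> then xi1 n \<omega> else xi2 n \<omega>"
  assumes M: "prob_space M"
    and ab: "0 < a" "a \<le> b"
    and mu1: "prob_space mu1" "sets mu1 = sets S"
    and mu2: "prob_space mu2" "sets mu2 = sets S"
    and u_meas: "u \<in> borel_measurable S"
    and u_range: "\<And>s. s \<in> space S \<Longrightarrow> a \<le> u s \<and> u s \<le> b"
    and xi1_meas: "\<And>n. 1 \<le> n \<Longrightarrow> xi1 n \<in> measurable M S"
    and xi2_meas: "\<And>n. 1 \<le> n \<Longrightarrow> xi2 n \<in> measurable M S"
    and U_meas: "\<And>n. 1 \<le> n \<Longrightarrow> U n \<in> borel_measurable M"
    and xi1_distr: "\<And>n. 1 \<le> n \<Longrightarrow> distr M S (xi1 n) = mu1"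
    and xi2_distr: "\<And>n. 1 \<le> n \<Longrightarrow> distr M S (xi2 n) = mu2"
    and U_distr: "\<And>n. 1 \<le> n \<Longrightarrow> distr M lborel (U n) = uniform_measure lborel {0<..<1}"
    and indep: "arru_indep M S xi1 xi2 U"
    and y0: "0 < y10" "0 < y20"
    and rho_meas: "\<And>n. rho1 n \<in> borel_measurable (arru_filt M S X Obs n)"
                  "\<And>n. rho2 n \<in> borel_measurable (arru_filt M S X Obs n)"
    and rho_range: "\<And>n \<omega>. \<omega> \<in> space M \<Longrightarrow> 0 < rho1 n \<omega> \<and> rho1 n \<omega> < 1"
                   "\<And>n \<omega>. \<omega> \<in> space M \<Longrightarrow> 0 < rho2 n \<omega> \<and> rho2 n \<omega> < 1"
    and rho_order: "\<And>n. AE \<omega> in M. rho2 n \<omega> \<le> rho1 n \<omega>"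
  shows "(AE \<omega> in M. filterlim (\<lambda>n. fst (Yp \<omega> n) + snd (Yp \<omega> n)) at_top sequentially)
       \<and> (AE \<omega> in M. filterlim (\<lambda>n. min (card {i\<in>{1..n}. X i \<omega>}) (card {i\<in>{1..n}. \<not> X i \<omega>}))
                       at_top sequentially)"
proof -
  interpret A: arru_loc M S u a b y10 y20 xi1 xi2 U rho1 rho2 Yp X Obs
    by (rule arru_loc.intro) (fact | (simp add: Yp_def X_def Obs_def))+
  show ?thesis using A.part_a A.part_b by (simp add: A.Y1_def A.Y2_def)
qed

end
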